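(* Let $J_{\mathrm{dual}}$, $H$, $W$ be as in the context. Assume that the set $\Gamma_+^*$ of minimizers of $J_{\mathrm{dual}}$ is nonempty, and let $\lambda^*\in\Gamma_+^*$. Let $\{\lambda^k\}$ be generated by the BSUM iteration described in the context, from a starting point $\lambda^0$ with $J_{\mathrm{dual}}(\lambda^0)<\infty$. Define $\mathcal F=\{\lambda:J_{\mathrm{dual}}(\lambda)\le J_{\mathrm{dual}}(\lambda^0)\}$ and $\mathcal R=\sup_{\lambda\in\mathcal F,\ \lambda'\in\Gamma_+^*}\|\lambda-\lambda'\|$, and assume $\mathcal R<\infty$. Let $\sigma=1/(9\|H\|\mathcal R^2)$ and $c=\max\{4\sigma-2,\ J_{\mathrm{dual}}(\lambda^0)-J_{\mathrm{dual}}(\lambda^* ),\ 2\}$. Then $J_{\mathrm{dual}}(\lambda^k)-J_{\mathrm{dual}}(\lambda^* )\le \frac{c}{\sigma}\cdot\frac1k$ for all $k\ge1$.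
   Context: $\Gamma_+^k=\{\mathrm{vec}(X):X\in\mathbb{R}^{k\times k}\text{ symmetric positive semidefinite}\}\subset\mathbb{R}^{k^2}$. $I_C$ denotes the indicator function of $C$, and $\Pi_C$ denotes Euclidean projection onto $C$. $\lambda=(\lambda_{\hat Q},\lambda_{\hat P},\lambda_{\hat R})\in\mathbb{R}^{n^2}\times\mathbb{R}^{n^2}\times\mathbb{R}^{m^2}$. $H$ is symmetric positive semidefinite, partitioned conformally into blocks $H_{ij}$ with $i,j\in\{Q,P,R\}$ and $H_{ji}=H_{ij}^\top$. (In the paper $H=U(\Omega^\top\Omega)^\dagger U^\top$.) $W=[0_{1\times n^2},\mathrm{vec}(\epsilon I_n)^\top,\mathrm{vec}(\epsilon I_m)^\top]^\top$ with $\epsilon>0$. The objective is $J_{\mathrm{dual}}(\lambda)=\tfrac14\lambda^\top H\lambda+\lambda^\top W+I_{\Gamma_+^n}(\lambda_{\hat Q})+I_{\Gamma_+^n}(\lambda_{\hat P})+I_{\Gamma_+^m}(\lambda_{\hat R})$. $\|H\|$ is the spectral norm. BSUM iteration: let $\alpha=\lambda_{\max}(H_{QQ})$, $\beta=\lambda_{\max}(H_{PP})$, $\gamma=\lambda_{\max}(H_{RR})$, all assumed positive. The blocks are updated cyclically. Each block is updated by minimizing $J_{\mathrm{dual}}$ in that block, with the other blocks fixed at their most recent values, plus the proximal term $\tfrac12\|\lambda_i-\lambda_i^k\|^2_{S_i}$, where $S_{\hat Q}=\alpha I-\tfrac12H_{QQ}$, $S_{\hat P}=\beta I-\tfrac12H_{PP}$,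 $S_{\hat R}=\gamma I-\tfrac12H_{RR}$. Explicitly: - $\lambda_{\hat Q}^{k+1}=\Pi_{\Gamma_+^n}\big(\lambda_{\hat Q}^k-\tfrac1{2\alpha}(H_{QQ}\lambda_{\hat Q}^k+H_{QP}\lambda_{\hat P}^k+H_{QR}\lambda_{\hat R}^k)\big)$; - $\lambda_{\hat P}^{k+1}=\Pi_{\Gamma_+^n}\big(\lambda_{\hat P}^k-\tfrac1{2\beta}(H_{PQ}\lambda_{\hat Q}^{k+1}+H_{PP}\lambda_{\hat P}^k+H_{PR}\lambda_{\hat R}^k)-\tfrac1\beta\mathrm{vec}(\epsilon I_n)\big)$; - $\lambda_{\hat R}^{k+1}=\Pi_{\Gamma_+^m}\big(\lambda_{\hat R}^k-\tfrac1{2\gamma}(H_{RQ}\lambda_{\hat Q}^{k+1}+H_{RP}\lambda_{\hat P}^{k+1}+H_{RR}\lambda_{\hat R}^k)-\tfrac1\gamma\mathrm{vec}(\epsilon I_m)\big)$. *)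

theory Defs
  imports "HOL-Analysis.Analysis"
begin

text \<open>The dual variable lambda = (lambda_Q, lambda_P, lambda_R) is one real vector indexed by
  the disjoint union of the index sets of the three blocks; block entries are indexed by
  matrix positions (i,j), which is vec(.) up to a fixed enumeration of positions.\<close>

type_synonym ('n,'m) bidx = "('n \<times> 'n) + (('n \<times> 'n) + ('m \<times> 'm))"

definition vecm :: "real^('k::finite)^'k \<Rightarrow> real^('k \<times> 'k)" where
  "vecm X = (\<chi> p. X $ fst p $ snd p)"

definition psd_mat :: "real^('k::finite)^'k \<Rightarrow> bool" where
  "psd_mat X \<longleftrightarrow> transpose X = X \<and> (\<forall>v. 0 \<le> v \<bullet> (X *v v))"

definition Gamma_plus :: "(real^(('k::finite) \<times> 'k)) set" where
  "Gamma_plus = {vecm X | X. psd_mat X}"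

definition lambda_max :: "real^('k::finite)^'k \<Rightarrow> real" where
  "lambda_max A = Max {\<mu>. \<exists>v. v \<noteq> 0 \<and> A *v v = \<mu> *\<^sub>R v}"

definition iQ :: "'n \<times> 'n \<Rightarrow> ('n,'m) bidx" where "iQ = Inl"
definition iP :: "'n \<times> 'n \<Rightarrow> ('n,'m) bidx" where "iP = Inr \<circ> Inl"
definition iR :: "'m \<times> 'm \<Rightarrow> ('n,'m) bidx" where "iR = Inr \<circ> Inr"

definition blk :: "('a::finite \<Rightarrow> 'i::finite) \<Rightarrow> real^'i \<Rightarrow> real^'a" where
  "blk f l = (\<chi> p. l $ f p)"

definition Hblk :: "('a::finite \<Rightarrow> 'i::finite) \<Rightarrow> ('b::finite \<Rightarrow> 'i) \<Rightarrow> real^'i^'i \<Rightarrow> real^'b^'a" where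
  "Hblk f g H = (\<chi> p q. H $ f p $ g q)"

definition join :: "real^('n::finite \<times> 'n) \<Rightarrow> real^('n \<times> 'n) \<Rightarrow> real^('m::finite \<times> 'm) \<Rightarrow> real^(('n,'m) bidx)" where
  "join Q P R = (\<chi> k. case k of Inl p \<Rightarrow> Q $ p | Inr (Inl p) \<Rightarrow> P $ p | Inr (Inr p) \<Rightarrow> R $ p)"

definition Wvec :: "real \<Rightarrow> real^(('n::finite,'m::finite) bidx)" where
  "Wvec eps = join 0 (vecm (eps *\<^sub>R mat 1)) (vecm (eps *\<^sub>R mat 1))"

definition J_dual :: "real^(('n::finite,'m::finite) bidx)^(('n,'m) bidx) \<Rightarrow> real
    \<Rightarrow> real^(('n,'m) bidx) \<Rightarrow> ereal" where
  "J_dual H eps l =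
    (if blk iQ l \<in> Gamma_plus \<and> blk iP l \<in> Gamma_plus \<and> blk iR l \<in> Gamma_plus
     then ereal ((1/4) * (l \<bullet> (H *v l)) + l \<bullet> Wvec eps) else \<infinity>)"

definition dual_minimizers :: "real^(('n::finite,'m::finite) bidx)^(('n,'m) bidx) \<Rightarrow> real
    \<Rightarrow> (real^(('n,'m) bidx)) set" where
  "dual_minimizers H eps = {l. \<forall>l'. J_dual H eps l \<le> J_dual H eps l'}"

definition bsum_step :: "real^(('n::finite,'m::finite) bidx)^(('n,'m) bidx) \<Rightarrow> real
    \<Rightarrow> real^(('n,'m) bidx) \<Rightarrow> real^(('n,'m) bidx)" where
  "bsum_step H eps l =
    (let \<alpha> = lambda_max (Hblk iQ iQ H);
         \<beta> = lambda_max (Hblk iP iP H);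
         \<gamma> = lambda_max (Hblk iR iR H);
         Q = blk iQ l; P = blk iP l; R = blk iR l;
         Q' = closest_point Gamma_plus
                (Q - (1 / (2 * \<alpha>)) *\<^sub>R (Hblk iQ iQ H *v Q + Hblk iQ iP H *v P + Hblk iQ iR H *v R));
         P' = closest_point Gamma_plus
                (P - (1 / (2 * \<beta>)) *\<^sub>R (Hblk iP iQ H *v Q' + Hblk iP iP H *v P + Hblk iP iR H *v R)
                   - (1 / \<beta>) *\<^sub>R vecm (eps *\<^sub>R mat 1));
         R' = closest_point Gamma_plus
                (R - (1 / (2 * \<gamma>)) *\<^sub>R (Hblk iR iQ H *v Q' + Hblk iR iP H *v P' + Hblk iR iR H *v R)
                   - (1 / \<gamma>) *\<^sub>R vecm (eps *\<^sub>R mat 1))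
     in join Q' P' R')"

end

theory Submission
  imports Defs "HOL-Analysis.Analysis"
begin


lemma sym_inner:
  fixes A :: "real^'k^'k"
  assumes "transpose A = A"
  shows "x \<bullet> (A *v y) = y \<bullet> (A *v x)"
proof -
  have "x \<bullet> (A *v y) = (x v* A) \<bullet> y" by (simp add: dot_lmul_matrix)
  also have "\<dots> = (transpose A *v x) \<bullet> y" by simp
  also have "\<dots> = y \<bullet> (A *v x)" using assms by (simp add: inner_commute)
  finally show ?thesis .
qed

lemma quad_expand:
  fixes A :: "real^'k^'k"
  assumes "transpose A = A"
  shows "(v + t *\<^sub>R w) \<bullet> (A *v (v + t *\<^sub>R w)) = v \<bullet> (A *v v) + 2 * t * (w \<bullet> (A *v v)) + t\<^sup>2 * (w \<bullet> (A *v w))"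
  using sym_inner[OF assms, of v w]
  by (simp add: matrix_vector_right_distrib matrix_vector_mult_scaleR inner_add_left inner_add_right
      power2_eq_square algebra_simps)

lemma spectral:
  fixes A :: "real^'k^'k"
  assumes sym: "transpose A = A"
  shows "\<forall>x. x \<bullet> (A *v x) \<le> lambda_max A * (x \<bullet> x)"
    and "\<exists>v. v \<noteq> 0 \<and> A *v v = lambda_max A *\<^sub>R v"
proof -
  define q where "q x = x \<bullet> (A *v x)" for x :: "real^'k"
  have cont: "continuous_on (sphere 0 1) q"
    unfolding q_def by (intro continuous_intros linear_continuous_on bounded_linear_inner_right)
       (simp add: linear_conv_bounded_linear)
  obtain v where v: "v \<in> sphere 0 1" and vmax: "\<forall>y\<in>sphere 0 1. q y \<le> q v"
    using continuous_attains_sup[OF compact_sphere _ cont] by auto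
  define \<mu> where "\<mu> = q v"
  have nv: "v \<bullet> v = 1" using v by (simp add: dot_square_norm)
  have qle: "q x \<le> \<mu> * (x \<bullet> x)" for x
  proof (cases "x = 0")
    case True then show ?thesis by (simp add: q_def)
  next
    case False
    define u where "u = (1 / norm x) *\<^sub>R x"
    have "u \<in> sphere 0 1" using False by (simp add: u_def)
    then have "q u \<le> \<mu>" using vmax \<mu>_def by auto
    moreover have "q u = q x / (norm x)\<^sup>2"
      by (simp add: q_def u_def matrix_vector_mult_scaleR power2_eq_square)
    moreover have "x \<bullet> x = (norm x)\<^sup>2" by (simp add: dot_square_norm)
    moreover have "(norm x)\<^sup>2 > 0" using False by simp
    ultimately show ?thesis by (simp add: divide_le_eq mult.commute)
  qed
  have eig: "A *v v = \<mu> *\<^sub>R v"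
  proof (rule ccontr)
    assume ne: "A *v v \<noteq> \<mu> *\<^sub>R v"
    define w where "w = A *v v - \<mu> *\<^sub>R v"
    define c where "c = w \<bullet> w"
    define P where "P = q w - \<mu> * (w \<bullet> w)"
    have cpos: "c > 0" using ne by (simp add: c_def w_def)
    have Pn: "P \<le> 0" using qle[of w] by (simp add: P_def)
    have key: "2 * t * c + t\<^sup>2 * P \<le> 0" for t
    proof -
      have h1: "q (v + t *\<^sub>R w) \<le> \<mu> * ((v + t *\<^sub>R w) \<bullet> (v + t *\<^sub>R w))" by (rule qle)
      have h2: "q (v + t *\<^sub>R w) = \<mu> + 2 * t * (w \<bullet> (A *v v)) + t\<^sup>2 * q w"
        using quad_expand[OF sym] by (simp add: q_def \<mu>_def)
      have h3: "(v + t *\<^sub>R w) \<bullet> (v + t *\<^sub>R w) = 1 + 2 * t * (w \<bullet> v) + t\<^sup>2 * (w \<bullet> w)"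
        using nv by (simp add: inner_add_left inner_add_right inner_commute power2_eq_square algebra_simps)
      have h4: "w \<bullet> (A *v v) = c + \<mu> * (w \<bullet> v)"
        by (simp add: c_def w_def inner_diff_right)
      have "\<mu> + 2 * t * (c + \<mu> * (w \<bullet> v)) + t\<^sup>2 * q w \<le> \<mu> * (1 + 2 * t * (w \<bullet> v) + t\<^sup>2 * (w \<bullet> w))"
        using h1 unfolding h2 h3 h4 .
      then show ?thesis unfolding P_def by (simp add: algebra_simps)
    qed
    define t where "t = c / (1 - P)"
    have tpos: "t > 0" using cpos Pn by (simp add: t_def)
    have "2 * t * c + t * t * P \<le> 0" using key[of t] by (simp add: power2_eq_square)
    then have "t * (2 * c + t * P) \<le> 0" by (simp add: algebra_simps)
    then have "2 * c + t * P \<le> 0" using tpos by (simp add: mult_le_0_iff)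
    moreover have "t * P = c * P / (1 - P)" by (simp add: t_def)
    moreover have "c * P / (1 - P) \<ge> - c"
    proof -
      have "c * P \<ge> - c * (1 - P)" using cpos Pn by (simp add: algebra_simps)
      then show ?thesis using Pn by (simp add: le_divide_eq)
    qed
    ultimately show False using cpos by linarith
  qed
  define ES where "ES = {\<nu>. \<exists>u. u \<noteq> 0 \<and> A *v u = \<nu> *\<^sub>R u}"
  define ev where "ev \<nu> = (SOME u. u \<noteq> 0 \<and> A *v u = \<nu> *\<^sub>R u)" for \<nu>
  have ev: "ev \<nu> \<noteq> 0 \<and> A *v ev \<nu> = \<nu> *\<^sub>R ev \<nu>" if "\<nu> \<in> ES" for \<nu>
    using that unfolding ES_def ev_def by (rule CollectE) (rule someI_ex)
  have inj: "inj_on ev ES"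
  proof (rule inj_onI)
    fix a b assume "a \<in> ES" "b \<in> ES" "ev a = ev b"
    then have "a *\<^sub>R ev a = b *\<^sub>R ev a" "ev a \<noteq> 0" using ev by metis+
    then show "a = b" by (simp add: scaleR_cancel_right)
  qed
  have orth: "pairwise orthogonal (ev ` ES)"
  proof (clarsimp simp: pairwise_def)
    fix a b assume ab: "a \<in> ES" "b \<in> ES" "ev a \<noteq> ev b"
    then have "a \<noteq> b" by auto
    have "a * (ev a \<bullet> ev b) = (A *v ev a) \<bullet> ev b" using ev[OF ab(1)] by simp
    also have "\<dots> = ev a \<bullet> (A *v ev b)" using sym_inner[OF sym, of "ev b" "ev a"] by (simp add: inner_commute)
    also have "\<dots> = b * (ev a \<bullet> ev b)" using ev[OF ab(2)] by simp
    finally have "(a - b) * (ev a \<bullet> ev b) = 0" by (simp add: algebra_simps)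
    then show "orthogonal (ev a) (ev b)" using \<open>a \<noteq> b\<close> by (simp add: orthogonal_def)
  qed
  have "0 \<notin> ev ` ES" using ev by auto
  then have "independent (ev ` ES)" using orth pairwise_orthogonal_independent by blast
  then have "finite (ev ` ES)" by (rule finiteI_independent)
  then have fin: "finite ES" using inj finite_imageD by blast
  have vne: "v \<noteq> 0" using v by auto
  have muin: "\<mu> \<in> ES" unfolding ES_def using vne eig by blast
  have "\<nu> \<le> \<mu>" if nuES: "\<nu> \<in> ES" for \<nu>
  proof -
    obtain u where u: "u \<noteq> 0" "A *v u = \<nu> *\<^sub>R u" using nuES unfolding ES_def by auto
    have "\<nu> * (u \<bullet> u) = q u" by (simp add: q_def u(2))
    also have "\<dots> \<le> \<mu> * (u \<bullet> u)" by (rule qle)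
    finally show ?thesis using u(1) by (simp add: mult_le_cancel_right)
  qed
  then have lm: "lambda_max A = \<mu>" unfolding lambda_max_def ES_def[symmetric]
    by (intro Max_eqI fin muin) auto
  show "\<forall>x. x \<bullet> (A *v x) \<le> lambda_max A * (x \<bullet> x)" using qle lm q_def by simp
  show "\<exists>v. v \<noteq> 0 \<and> A *v v = lambda_max A *\<^sub>R v" using vne eig lm by auto
qed



lemma vecm_inj: "vecm X = l \<longleftrightarrow> X = (\<chi> i j. l $ (i, j))"
  by (auto simp: vecm_def vec_eq_iff)

lemma quad_as_inner:
  fixes X :: "real^'k^'k"
  shows "v \<bullet> (X *v v) = (\<chi> p. v $ fst p * v $ snd p) \<bullet> vecm X"
proof -
  have "v \<bullet> (X *v v) = (\<Sum>i\<in>UNIV. \<Sum>j\<in>UNIV. v $ i * v $ j * X $ i $ j)"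
    by (simp add: inner_vec_def matrix_vector_mult_def sum_distrib_left algebra_simps)
  also have "\<dots> = (\<Sum>p\<in>UNIV \<times> UNIV. v $ fst p * v $ snd p * X $ fst p $ snd p)"
    by (subst sum.cartesian_product) (simp add: case_prod_beta)
  also have "\<dots> = (\<chi> p. v $ fst p * v $ snd p) \<bullet> vecm X"
    by (simp add: inner_vec_def vecm_def UNIV_Times_UNIV)
  finally show ?thesis .
qed

lemma Gamma_plus_eq:
  "(Gamma_plus :: (real^('k::finite \<times> 'k)) set) =
     (\<Inter>p. {l. (axis p 1 - axis (snd p, fst p) (1::real)) \<bullet> l = 0}) \<inter>
     (\<Inter>v::real^'k. {l. (\<chi> p. v $ fst p * v $ snd p) \<bullet> l \<ge> 0})"
proof -
  have "l \<in> Gamma_plus \<longleftrightarrow> psd_mat (\<chi> i j. l $ (i, j))" for l :: "real^('k \<times> 'k)"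
  proof
    assume "l \<in> Gamma_plus"
    then obtain X where "l = vecm X" "psd_mat X" unfolding Gamma_plus_def by auto
    then show "psd_mat (\<chi> i j. l $ (i, j))" using vecm_inj by metis
  next
    assume "psd_mat (\<chi> i j. l $ (i, j))"
    moreover have "l = vecm (\<chi> i j. l $ (i, j))" using vecm_inj by metis
    ultimately show "l \<in> Gamma_plus" unfolding Gamma_plus_def by blast
  qed
  moreover have "psd_mat (\<chi> i j. l $ (i, j)) \<longleftrightarrow>
      (\<forall>p. (axis p 1 - axis (snd p, fst p) (1::real)) \<bullet> l = 0) \<and>
      (\<forall>v::real^'k. (\<chi> p. v $ fst p * v $ snd p) \<bullet> l \<ge> 0)" for l :: "real^('k \<times> 'k)"
  proof -
    have vm: "vecm (\<chi> i j. l $ (i, j)) = l" using vecm_inj by blast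
    have "transpose (\<chi> i j. l $ (i, j)) = (\<chi> i j. l $ (i, j)) \<longleftrightarrow>
          (\<forall>p. (axis p 1 - axis (snd p, fst p) (1::real)) \<bullet> l = 0)"
      by (auto simp: transpose_def vec_eq_iff inner_diff_left inner_axis')
    moreover have "(\<forall>v. 0 \<le> v \<bullet> ((\<chi> i j. l $ (i, j)) *v v)) \<longleftrightarrow>
          (\<forall>v::real^'k. (\<chi> p. v $ fst p * v $ snd p) \<bullet> l \<ge> 0)"
      using quad_as_inner[of _ "(\<chi> i j. l $ (i, j))"] vm by simp
    ultimately show ?thesis unfolding psd_mat_def by blast
  qed
  ultimately show ?thesis by blast
qed

lemma Gamma_plus_closed: "closed (Gamma_plus :: (real^('k::finite \<times> 'k)) set)"
  unfolding Gamma_plus_eq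
  by (intro closed_Int closed_INT ballI closed_hyperplane closed_halfspace_ge)

lemma Gamma_plus_convex: "convex (Gamma_plus :: (real^('k::finite \<times> 'k)) set)"
  unfolding Gamma_plus_eq
  by (intro convex_Int convex_INT convex_hyperplane convex_halfspace_ge)

lemma Gamma_plus_zero: "0 \<in> (Gamma_plus :: (real^('k::finite \<times> 'k)) set)"
  unfolding Gamma_plus_eq by simp

lemma Gamma_plus_ne: "(Gamma_plus :: (real^('k::finite \<times> 'k)) set) \<noteq> {}"
  using Gamma_plus_zero by auto



lemma sum_Plus_UNIV:
  "sum g (UNIV :: ('a::finite + 'b::finite) set) = sum (\<lambda>x. g (Inl x)) UNIV + sum (\<lambda>x. g (Inr x)) UNIV"
  using sum.Plus[of "UNIV::'a set" "UNIV::'b set" g] by (simp add: comp_def)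

lemma inner_join: "join Q P R \<bullet> join Q' P' R' = Q \<bullet> Q' + P \<bullet> P' + R \<bullet> R'"
  by (simp add: inner_vec_def join_def sum_Plus_UNIV)

lemma blk_join: "blk iQ (join Q P R) = Q" "blk iP (join Q P R) = P" "blk iR (join Q P R) = R"
  by (simp_all add: blk_def join_def iQ_def iP_def iR_def)

lemma join_blk: "join (blk iQ l) (blk iP l) (blk iR l) = l"
  by (auto simp: vec_eq_iff join_def blk_def iQ_def iP_def iR_def split: sum.split)

lemma join_add: "join Q P R + join Q' P' R' = join (Q + Q') (P + P') (R + R')"
  by (auto simp: vec_eq_iff join_def split: sum.split)

lemma join_diff: "join Q P R - join Q' P' R' = join (Q - Q') (P - P') (R - R')"
  by (auto simp: vec_eq_iff join_def split: sum.split)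

lemma join_scaleR: "c *\<^sub>R join Q P R = join (c *\<^sub>R Q) (c *\<^sub>R P) (c *\<^sub>R R)"
  by (auto simp: vec_eq_iff join_def split: sum.split)

lemma join_zero: "join 0 0 0 = 0"
  by (auto simp: vec_eq_iff join_def split: sum.split)

lemma H_join:
  fixes H :: "real^(('n::finite,'m::finite) bidx)^(('n,'m) bidx)"
  shows "H *v join Q P R =
    join (Hblk iQ iQ H *v Q + Hblk iQ iP H *v P + Hblk iQ iR H *v R)
         (Hblk iP iQ H *v Q + Hblk iP iP H *v P + Hblk iP iR H *v R)
         (Hblk iR iQ H *v Q + Hblk iR iP H *v P + Hblk iR iR H *v R)"
  by (auto simp: vec_eq_iff join_def matrix_vector_mult_def sum_Plus_UNIV Hblk_def iQ_def iP_def iR_def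
      split: sum.split)

lemma Hblk_sym:
  fixes H :: "real^'i^'i"
  assumes "transpose H = H"
  shows "transpose (Hblk f f H) = Hblk f f H"
proof -
  have "H $ i $ j = H $ j $ i" for i j
    using assms by (metis transpose_def vec_lambda_beta)
  then show ?thesis by (simp add: transpose_def Hblk_def vec_eq_iff)
qed



definition fq :: "real^'i^'i \<Rightarrow> real^'i \<Rightarrow> real^'i \<Rightarrow> real" where
  "fq H W z = (1/4) * (z \<bullet> (H *v z)) + z \<bullet> W"

definition gq :: "real^'i^'i \<Rightarrow> real^'i \<Rightarrow> real^'i \<Rightarrow> real^'i" where
  "gq H W z = (1/2) *\<^sub>R (H *v z) + W"

lemma fq_expand:
  fixes H :: "real^'i^'i"
  assumes sym: "transpose H = H"
  shows "fq H W (z + D) = fq H W z + gq H W z \<bullet> D + (1/4) * (D \<bullet> (H *v D))"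
  using sym_inner[OF sym, of z D]
  by (simp add: fq_def gq_def matrix_vector_right_distrib inner_add_left inner_add_right algebra_simps inner_commute)

lemma fq_convex:
  fixes H :: "real^'i^'i"
  assumes sym: "transpose H = H" and psd: "\<forall>v. 0 \<le> v \<bullet> (H *v v)"
  shows "fq H W z - fq H W y \<le> gq H W z \<bullet> (z - y)"
proof -
  have "fq H W (z + (y - z)) = fq H W z + gq H W z \<bullet> (y - z) + (1/4) * ((y - z) \<bullet> (H *v (y - z)))"
    by (rule fq_expand[OF sym])
  moreover have "0 \<le> (y - z) \<bullet> (H *v (y - z))" using psd by blast
  ultimately show ?thesis by (simp add: inner_diff_right)
qed

lemma psd_amgm:
  fixes H :: "real^'i^'i"
  assumes sym: "transpose H = H" and psd: "\<forall>v. 0 \<le> v \<bullet> (H *v v)" and t: "t > 0"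
  shows "V \<bullet> (H *v D) \<le> (t/2) * (V \<bullet> (H *v V)) + (1/(2*t)) * (D \<bullet> (H *v D))"
proof -
  have "0 \<le> (D + (-t) *\<^sub>R V) \<bullet> (H *v (D + (-t) *\<^sub>R V))" using psd by blast
  also have "\<dots> = D \<bullet> (H *v D) + 2 * (-t) * (V \<bullet> (H *v D)) + (-t)\<^sup>2 * (V \<bullet> (H *v V))"
    by (rule quad_expand[OF sym])
  finally have "2 * t * (V \<bullet> (H *v D)) \<le> D \<bullet> (H *v D) + t\<^sup>2 * (V \<bullet> (H *v V))" by simp
  then have "V \<bullet> (H *v D) \<le> (D \<bullet> (H *v D) + t\<^sup>2 * (V \<bullet> (H *v V))) / (2 * t)"
    using t by (simp add: le_divide_eq mult.commute mult.left_commute)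
  also have "\<dots> = (t/2) * (V \<bullet> (H *v V)) + (1/(2*t)) * (D \<bullet> (H *v D))"
    using t by (simp add: field_simps power2_eq_square)
  finally show ?thesis .
qed

lemma real_amgm_aux:
  fixes t A B C :: real
  assumes t: "t > 0" and h: "0 \<le> t\<^sup>2 * A + 2 * t * B + C"
  shows "- B \<le> (t/2) * A + (1/(2*t)) * C"
proof -
  have "(t/2) * A + (1/(2*t)) * C + B = (t\<^sup>2 * A + 2 * t * B + C) / (2 * t)"
    using t by (simp add: field_simps power2_eq_square)
  also have "\<dots> \<ge> 0" using t h by simp
  finally show ?thesis by linarith
qed

lemma inner_amgm:
  fixes d v :: "'a::real_inner"
  assumes t: "t > 0" and a: "a \<ge> 0"
  shows "- a * (d \<bullet> v) \<le> a * ((t/2) * (v \<bullet> v) + (1/(2*t)) * (d \<bullet> d))"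
proof -
  have "(t *\<^sub>R v + d) \<bullet> (t *\<^sub>R v + d) = t\<^sup>2 * (v \<bullet> v) + 2 * t * (d \<bullet> v) + d \<bullet> d"
    by (simp add: inner_add_left inner_add_right inner_commute[of v d] power2_eq_square algebra_simps)
  moreover have "0 \<le> (t *\<^sub>R v + d) \<bullet> (t *\<^sub>R v + d)" by simp
  ultimately have "- (d \<bullet> v) \<le> (t/2) * (v \<bullet> v) + (1/(2*t)) * (d \<bullet> d)"
    using real_amgm_aux[OF t] by simp
  then have "a * (- (d \<bullet> v)) \<le> a * ((t/2) * (v \<bullet> v) + (1/(2*t)) * (d \<bullet> d))"
    by (rule mult_left_mono[OF _ a])
  then show ?thesis by simp
qed

lemma block_step:
  fixes H :: "real^'i^'i" and W z :: "real^'i" and Eb :: "real^'a \<Rightarrow> real^'i"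
    and Bb :: "real^'i \<Rightarrow> real^'a" and C :: "(real^'a) set"
  assumes adj: "\<And>x v. Eb x \<bullet> v = x \<bullet> Bb v"
    and sym: "transpose H = H"
    and quadb: "\<And>x. Eb x \<bullet> (H *v Eb x) \<le> \<alpha> * (x \<bullet> x)"
    and C: "closed C" "convex C" and zC: "Bb z \<in> C" and apos: "\<alpha> > 0"
    and xdef: "x' = closest_point C (Bb z - (1/\<alpha>) *\<^sub>R Bb (gq H W z))"
  shows "fq H W (z + Eb (x' - Bb z)) \<le> fq H W z - (3/4) * \<alpha> * ((x' - Bb z) \<bullet> (x' - Bb z))"
    and "\<And>y. y \<in> C \<Longrightarrow> gq H W z \<bullet> Eb (x' - y) \<le> - \<alpha> * ((x' - Bb z) \<bullet> (x' - y))"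
proof -
  define d where "d = x' - Bb z"
  have opt: "gq H W z \<bullet> Eb (x' - y) \<le> - \<alpha> * (d \<bullet> (x' - y))" if yC: "y \<in> C" for y
  proof -
    have "(Bb z - (1/\<alpha>) *\<^sub>R Bb (gq H W z) - x') \<bullet> (y - x') \<le> 0"
      unfolding xdef by (rule closest_point_dot[OF C(2,1) yC])
    moreover have "Bb z - (1/\<alpha>) *\<^sub>R Bb (gq H W z) - x' = - (d + (1/\<alpha>) *\<^sub>R Bb (gq H W z))"
      unfolding d_def by (simp add: algebra_simps)
    moreover have "y - x' = - (x' - y)" by simp
    ultimately have "(d + (1/\<alpha>) *\<^sub>R Bb (gq H W z)) \<bullet> (x' - y) \<le> 0"
      by (metis inner_minus_left inner_minus_right minus_minus)
    then have "d \<bullet> (x' - y) + (1/\<alpha>) * (Bb (gq H W z) \<bullet> (x' - y)) \<le> 0"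
      by (simp add: inner_add_left)
    then have "\<alpha> * (d \<bullet> (x' - y)) + Bb (gq H W z) \<bullet> (x' - y) \<le> 0"
    proof -
      have "\<alpha> * (d \<bullet> (x' - y) + (1/\<alpha>) * (Bb (gq H W z) \<bullet> (x' - y))) \<le> 0"
        using \<open>d \<bullet> (x' - y) + (1/\<alpha>) * (Bb (gq H W z) \<bullet> (x' - y)) \<le> 0\<close> apos
        by (simp add: mult_nonneg_nonpos)
      then show ?thesis using apos by (simp add: distrib_left)
    qed
    moreover have "gq H W z \<bullet> Eb (x' - y) = Bb (gq H W z) \<bullet> (x' - y)"
      using adj[of "x' - y" "gq H W z"] by (simp only: inner_commute)
    ultimately show ?thesis by simp
  qed
  then show "\<And>y. y \<in> C \<Longrightarrow> gq H W z \<bullet> Eb (x' - y) \<le> - \<alpha> * ((x' - Bb z) \<bullet> (x' - y))"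
    unfolding d_def by blast
  have "gq H W z \<bullet> Eb d \<le> - \<alpha> * (d \<bullet> d)" using opt[OF zC] by (simp add: d_def)
  moreover have "fq H W (z + Eb d) = fq H W z + gq H W z \<bullet> Eb d + (1/4) * (Eb d \<bullet> (H *v Eb d))"
    by (rule fq_expand[OF sym])
  moreover have "Eb d \<bullet> (H *v Eb d) \<le> \<alpha> * (d \<bullet> d)" by (rule quadb)
  ultimately show "fq H W (z + Eb (x' - Bb z)) \<le> fq H W z - (3/4) * \<alpha> * ((x' - Bb z) \<bullet> (x' - Bb z))"
    unfolding d_def[symmetric] by simp
qed



lemma blk_add: "blk f (a + b) = blk f a + blk f b"
  by (simp add: blk_def vec_eq_iff)
lemma blk_scaleR: "blk f (c *\<^sub>R a) = c *\<^sub>R blk f a"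
  by (simp add: blk_def vec_eq_iff)

lemma gq_add:
  fixes H :: "real^'i^'i"
  shows "gq H W (z + D) = gq H W z + (1/2) *\<^sub>R (H *v D)"
  by (simp add: gq_def matrix_vector_right_distrib algebra_simps)

lemma lmax_le:
  fixes A :: "real^'k^'k" and H :: "real^'i^'i" and Eb :: "real^'k \<Rightarrow> real^'i"
  assumes "transpose A = A" "\<And>x. Eb x \<bullet> (H *v Eb x) = x \<bullet> (A *v x)" "\<And>x. Eb x \<bullet> Eb x = x \<bullet> x"
    "\<And>x. x \<bullet> (H *v x) \<le> L * (x \<bullet> x)"
  shows "lambda_max A \<le> L"
proof -
  obtain v where v: "v \<noteq> 0" "A *v v = lambda_max A *\<^sub>R v" using spectral(2)[OF assms(1)] by blast
  have "lambda_max A * (v \<bullet> v) = v \<bullet> (A *v v)" using v by simp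
  also have "\<dots> = Eb v \<bullet> (H *v Eb v)" using assms(2) by simp
  also have "\<dots> \<le> L * (Eb v \<bullet> Eb v)" by (rule assms(4))
  also have "\<dots> = L * (v \<bullet> v)" using assms(3) by simp
  finally show ?thesis using v(1) by (simp add: mult_le_cancel_right)
qed

definition feas :: "real^(('n::finite,'m::finite) bidx) \<Rightarrow> bool" where
  "feas l \<longleftrightarrow> blk iQ l \<in> Gamma_plus \<and> blk iP l \<in> Gamma_plus \<and> blk iR l \<in> Gamma_plus"

lemma adjQ: "join x 0 0 \<bullet> v = x \<bullet> blk iQ v"
  using inner_join[of x 0 0 "blk iQ v" "blk iP v" "blk iR v"] by (simp add: join_blk)
lemma adjP: "join 0 x 0 \<bullet> v = x \<bullet> blk iP v"
  using inner_join[of 0 x 0 "blk iQ v" "blk iP v" "blk iR v"] by (simp add: join_blk)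
lemma adjR: "join 0 0 x \<bullet> v = x \<bullet> blk iR v"
  using inner_join[of 0 0 x "blk iQ v" "blk iP v" "blk iR v"] by (simp add: join_blk)

lemma quadQ: "join x 0 0 \<bullet> (H *v join x 0 0) = x \<bullet> (Hblk iQ iQ H *v x)"
  by (simp add: H_join inner_join)
lemma quadP: "join 0 x 0 \<bullet> (H *v join 0 x 0) = x \<bullet> (Hblk iP iP H *v x)"
  by (simp add: H_join inner_join)
lemma quadR: "join 0 0 x \<bullet> (H *v join 0 0 x) = x \<bullet> (Hblk iR iR H *v x)"
  by (simp add: H_join inner_join)

lemma normQ: "join x 0 0 \<bullet> join x 0 0 = x \<bullet> x" by (simp add: inner_join)
lemma normP: "join 0 x 0 \<bullet> join 0 x 0 = x \<bullet> x" by (simp add: inner_join)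
lemma normR: "join 0 0 x \<bullet> join 0 0 x = x \<bullet> x" by (simp add: inner_join)


lemma WQ: "blk iQ (Wvec eps :: real^(('n::finite,'m::finite) bidx)) = 0"
  by (simp add: Wvec_def blk_join)
lemma WP: "blk iP (Wvec eps :: real^(('n::finite,'m::finite) bidx)) = vecm (eps *\<^sub>R mat 1)"
  by (simp add: Wvec_def blk_join)
lemma WR: "blk iR (Wvec eps :: real^(('n::finite,'m::finite) bidx)) = vecm (eps *\<^sub>R mat 1)"
  by (simp add: Wvec_def blk_join)

lemma iter_step:
  fixes H :: "real^(('n::finite,'m::finite) bidx)^(('n,'m) bidx)" and l y :: "real^(('n,'m) bidx)"
  assumes sym: "transpose H = H" and psd: "\<forall>v. 0 \<le> v \<bullet> (H *v v)"
    and ap: "lambda_max (Hblk iQ iQ H) > 0"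
    and bp: "lambda_max (Hblk iP iP H) > 0"
    and gp: "lambda_max (Hblk iR iR H) > 0"
    and fl: "feas l" and fy: "feas y"
    and L: "\<And>x. x \<bullet> (H *v x) \<le> L * (x \<bullet> x)"
  shows "feas (bsum_step H eps l)"
    and "\<exists>E\<ge>0. fq H (Wvec eps) (bsum_step H eps l) \<le> fq H (Wvec eps) l - (3/4) * E \<and>
          (\<forall>t>0. fq H (Wvec eps) (bsum_step H eps l) - fq H (Wvec eps) y
              \<le> (5/4) * (t * L * ((bsum_step H eps l - y) \<bullet> (bsum_step H eps l - y)) + E / t))"
proof -
  define W where "W = (Wvec eps :: real^(('n,'m) bidx))"
  define \<alpha> where "\<alpha> = lambda_max (Hblk iQ iQ H)"
  define \<beta> where "\<beta> = lambda_max (Hblk iP iP H)"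
  define \<gamma> where "\<gamma> = lambda_max (Hblk iR iR H)"
  define Q where "Q = blk iQ l"
  define P where "P = blk iP l"
  define R where "R = blk iR l"
  define Q' where "Q' = closest_point Gamma_plus
                (Q - (1 / (2 * \<alpha>)) *\<^sub>R (Hblk iQ iQ H *v Q + Hblk iQ iP H *v P + Hblk iQ iR H *v R))"
  define P' where "P' = closest_point Gamma_plus
                (P - (1 / (2 * \<beta>)) *\<^sub>R (Hblk iP iQ H *v Q' + Hblk iP iP H *v P + Hblk iP iR H *v R)
                   - (1 / \<beta>) *\<^sub>R vecm (eps *\<^sub>R mat 1))"
  define R' where "R' = closest_point Gamma_plus
                (R - (1 / (2 * \<gamma>)) *\<^sub>R (Hblk iR iQ H *v Q' + Hblk iR iP H *v P' + Hblk iR iR H *v R)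
                   - (1 / \<gamma>) *\<^sub>R vecm (eps *\<^sub>R mat 1))"
  have l'eq: "bsum_step H eps l = join Q' P' R'"
    unfolding bsum_step_def Let_def Q'_def P'_def R'_def \<alpha>_def \<beta>_def \<gamma>_def Q_def P_def R_def ..
  have lQPR: "l = join Q P R" by (simp add: Q_def P_def R_def join_blk)
  have QG: "Q \<in> Gamma_plus" "P \<in> Gamma_plus" "R \<in> Gamma_plus"
    using fl by (simp_all add: feas_def Q_def P_def R_def)
  have Q'G: "Q' \<in> Gamma_plus" "P' \<in> Gamma_plus" "R' \<in> Gamma_plus"
    unfolding Q'_def P'_def R'_def by (simp_all add: closest_point_in_set Gamma_plus_closed Gamma_plus_ne)
  show "feas (bsum_step H eps l)" using Q'G by (simp add: l'eq feas_def blk_join)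
  have GC: "closed (Gamma_plus :: (real^(('n \<times> 'n))) set)" "convex (Gamma_plus :: (real^(('n \<times> 'n))) set)"
    "closed (Gamma_plus :: (real^(('m \<times> 'm))) set)" "convex (Gamma_plus :: (real^(('m \<times> 'm))) set)"
    by (simp_all add: Gamma_plus_closed Gamma_plus_convex)
  have spQ: "x \<bullet> (Hblk iQ iQ H *v x) \<le> \<alpha> * (x \<bullet> x)" for x
    using spectral(1)[OF Hblk_sym[OF sym, of iQ]] unfolding \<alpha>_def by blast
  have spP: "x \<bullet> (Hblk iP iP H *v x) \<le> \<beta> * (x \<bullet> x)" for x
    using spectral(1)[OF Hblk_sym[OF sym, of iP]] unfolding \<beta>_def by blast
  have spR: "x \<bullet> (Hblk iR iR H *v x) \<le> \<gamma> * (x \<bullet> x)" for x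
    using spectral(1)[OF Hblk_sym[OF sym, of iR]] unfolding \<gamma>_def by blast
  have aL: "\<alpha> \<le> L" unfolding \<alpha>_def
    by (rule lmax_le[OF Hblk_sym[OF sym], where Eb="\<lambda>x. join x 0 0"]) (simp add: quadQ, simp add: normQ, rule L)
  have bL: "\<beta> \<le> L" unfolding \<beta>_def
    by (rule lmax_le[OF Hblk_sym[OF sym], where Eb="\<lambda>x. join 0 x 0"]) (simp add: quadP, simp add: normP, rule L)
  have gL: "\<gamma> \<le> L" unfolding \<gamma>_def
    by (rule lmax_le[OF Hblk_sym[OF sym], where Eb="\<lambda>x. join 0 0 x"]) (simp add: quadR, simp add: normR, rule L)
  have apos: "\<alpha> > 0" "\<beta> > 0" "\<gamma> > 0" using ap bp gp by (simp_all add: \<alpha>_def \<beta>_def \<gamma>_def)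
  define z0 where "z0 = join Q P R"
  define z1 where "z1 = join Q' P R"
  define z2 where "z2 = join Q' P' R"
  define z3 where "z3 = join Q' P' R'"
  have gQ: "blk iQ (gq H W z0) = (1/2) *\<^sub>R (Hblk iQ iQ H *v Q + Hblk iQ iP H *v P + Hblk iQ iR H *v R)"
    by (simp add: gq_def blk_add blk_scaleR z0_def H_join blk_join W_def WQ)
  have gP: "blk iP (gq H W z1) = (1/2) *\<^sub>R (Hblk iP iQ H *v Q' + Hblk iP iP H *v P + Hblk iP iR H *v R)
                + vecm (eps *\<^sub>R mat 1)"
    by (simp add: gq_def blk_add blk_scaleR z1_def H_join blk_join W_def WP)
  have gR: "blk iR (gq H W z2) = (1/2) *\<^sub>R (Hblk iR iQ H *v Q' + Hblk iR iP H *v P' + Hblk iR iR H *v R)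
                + vecm (eps *\<^sub>R mat 1)"
    by (simp add: gq_def blk_add blk_scaleR z2_def H_join blk_join W_def WR)
  have xQ: "Q' = closest_point Gamma_plus (blk iQ z0 - (1/\<alpha>) *\<^sub>R blk iQ (gq H W z0))"
    unfolding gQ Q'_def by (simp add: z0_def blk_join mult.commute)
  have xP: "P' = closest_point Gamma_plus (blk iP z1 - (1/\<beta>) *\<^sub>R blk iP (gq H W z1))"
    unfolding gP P'_def by (simp add: z1_def blk_join scaleR_add_right algebra_simps)
  have xR: "R' = closest_point Gamma_plus (blk iR z2 - (1/\<gamma>) *\<^sub>R blk iR (gq H W z2))"
    unfolding gR R'_def by (simp add: z2_def blk_join scaleR_add_right algebra_simps)
  note sQ = block_step[where Eb="\<lambda>x. join x 0 0" and Bb="blk iQ" and H=H and \<alpha>=\<alpha> and C=Gamma_plus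
      and z=z0 and x'=Q' and W=W, OF adjQ sym _ GC(1,2) _ apos(1) xQ]
  note sP = block_step[where Eb="\<lambda>x. join 0 x 0" and Bb="blk iP" and H=H and \<alpha>=\<beta> and C=Gamma_plus
      and z=z1 and x'=P' and W=W, OF adjP sym _ GC(1,2) _ apos(2) xP]
  note sR = block_step[where Eb="\<lambda>x. join 0 0 x" and Bb="blk iR" and H=H and \<alpha>=\<gamma> and C=Gamma_plus
      and z=z2 and x'=R' and W=W, OF adjR sym _ GC(3,4) _ apos(3) xR]
  have bz: "blk iQ z0 = Q" "blk iP z1 = P" "blk iR z2 = R"
    by (simp_all add: z0_def z1_def z2_def blk_join)
  have zs: "z0 + join (Q' - Q) 0 0 = z1" "z1 + join 0 (P' - P) 0 = z2" "z2 + join 0 0 (R' - R) = z3"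
    by (simp_all add: z0_def z1_def z2_def z3_def join_add)
  have qb: "\<And>x. join x 0 0 \<bullet> (H *v join x 0 0) \<le> \<alpha> * (x \<bullet> x)"
    "\<And>x. join 0 x 0 \<bullet> (H *v join 0 x 0) \<le> \<beta> * (x \<bullet> x)"
    "\<And>x. join 0 0 x \<bullet> (H *v join 0 0 x) \<le> \<gamma> * (x \<bullet> x)"
    by (simp_all add: quadQ quadP quadR spQ spP spR)
  have zC: "blk iQ z0 \<in> Gamma_plus" "blk iP z1 \<in> Gamma_plus" "blk iR z2 \<in> Gamma_plus"
    by (simp_all add: bz QG)
  note sQ' = sQ[OF qb(1) zC(1)] and sP' = sP[OF qb(2) zC(2)] and sR' = sR[OF qb(3) zC(3)]
  have sQ1: "fq H W z1 \<le> fq H W z0 - (3/4) * \<alpha> * ((Q' - Q) \<bullet> (Q' - Q))"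
    using sQ'(1) bz zs by simp
  have sP1: "fq H W z2 \<le> fq H W z1 - (3/4) * \<beta> * ((P' - P) \<bullet> (P' - P))"
    using sP'(1) bz zs by simp
  have sR1: "fq H W z3 \<le> fq H W z2 - (3/4) * \<gamma> * ((R' - R) \<bullet> (R' - R))"
    using sR'(1) bz zs by simp

  define dQ where "dQ = Q' - Q"
  define dP where "dP = P' - P"
  define dR where "dR = R' - R"
  define vQ where "vQ = Q' - blk iQ y"
  define vP where "vP = P' - blk iP y"
  define vR where "vR = R' - blk iR y"
  define eQ where "eQ = \<alpha> * (dQ \<bullet> dQ)"
  define eP where "eP = \<beta> * (dP \<bullet> dP)"
  define eR where "eR = \<gamma> * (dR \<bullet> dR)"
  define E where "E = eQ + eP + eR"
  have eQn: "eQ \<ge> 0" "eP \<ge> 0" "eR \<ge> 0" using apos by (simp_all add: eQ_def eP_def eR_def)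
  have En: "E \<ge> 0" using eQn by (simp add: E_def)
  have dec: "fq H W z3 \<le> fq H W z0 - (3/4) * E"
  proof -
    have "fq H W z1 \<le> fq H W z0 - (3/4) * eQ" using sQ1 by (simp add: eQ_def dQ_def mult.assoc)
    moreover have "fq H W z2 \<le> fq H W z1 - (3/4) * eP" using sP1 by (simp add: eP_def dP_def mult.assoc)
    moreover have "fq H W z3 \<le> fq H W z2 - (3/4) * eR" using sR1 by (simp add: eR_def dR_def mult.assoc)
    ultimately have "fq H W z3 \<le> fq H W z0 - (3/4) * eQ - (3/4) * eP - (3/4) * eR" by argo
    then show ?thesis unfolding E_def by argo
  qed
  have yG: "blk iQ y \<in> Gamma_plus" "blk iP y \<in> Gamma_plus" "blk iR y \<in> Gamma_plus"
    using fy by (simp_all add: feas_def)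
  have Lpos: "L > 0" using aL apos by linarith
  have cost: "fq H W z3 - fq H W y \<le> (5/4) * (t * L * ((z3 - y) \<bullet> (z3 - y)) + E / t)" if t: "t > 0" for t
  proof -
    define u where "u = t / 2"
    define s where "s = 1 / (2 * t)"
    define aQ where "aQ = vQ \<bullet> vQ"
    define aP where "aP = vP \<bullet> vP"
    define aR where "aR = vR \<bullet> vR"
    define VQ :: "real^(('n,'m) bidx)" where "VQ = join vQ 0 0"
    define VP :: "real^(('n,'m) bidx)" where "VP = join 0 vP 0"
    define VR :: "real^(('n,'m) bidx)" where "VR = join 0 0 vR"
    define DQ :: "real^(('n,'m) bidx)" where "DQ = join dQ 0 0"
    define DP :: "real^(('n,'m) bidx)" where "DP = join 0 dP 0"
    define DR :: "real^(('n,'m) bidx)" where "DR = join 0 0 dR"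
    have upos: "u > 0" "s > 0" using t by (simp_all add: u_def s_def)
    have aN: "aQ \<ge> 0" "aP \<ge> 0" "aR \<ge> 0" by (simp_all add: aQ_def aP_def aR_def)
    have yeq: "y = join (blk iQ y) (blk iP y) (blk iR y)" by (simp add: join_blk)
    have z3y0: "z3 - y = join vQ vP vR"
    proof -
      have "z3 - y = join Q' P' R' - join (blk iQ y) (blk iP y) (blk iR y)"
        by (simp add: z3_def join_blk)
      then show ?thesis by (simp add: join_diff vQ_def vP_def vR_def)
    qed
    have z3y: "z3 - y = VQ + VP + VR"
      unfolding z3y0 by (simp add: VQ_def VP_def VR_def join_add)
    have N: "(z3 - y) \<bullet> (z3 - y) = aQ + aP + aR"
      unfolding z3y0 by (simp add: aQ_def aP_def aR_def inner_join)
    have g1: "gq H W z1 = gq H W z0 + (1/2) *\<^sub>R (H *v DQ)"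
      using zs(1) gq_add[of H W z0 DQ] by (simp add: DQ_def dQ_def)
    have g2: "gq H W z2 = gq H W z1 + (1/2) *\<^sub>R (H *v DP)"
      using zs(2) gq_add[of H W z1 DP] by (simp add: DP_def dP_def)
    have g3: "gq H W z3 = gq H W z2 + (1/2) *\<^sub>R (H *v DR)"
      using zs(3) gq_add[of H W z2 DR] by (simp add: DR_def dR_def)
    have conv: "fq H W z3 - fq H W y \<le> gq H W z3 \<bullet> (z3 - y)" by (rule fq_convex[OF sym psd])
    have split: "gq H W z3 \<bullet> (z3 - y) =
        gq H W z0 \<bullet> VQ + gq H W z1 \<bullet> VP + gq H W z2 \<bullet> VR
        + (1/2) * (VQ \<bullet> (H *v DQ)) + (1/2) * (VQ \<bullet> (H *v DP)) + (1/2) * (VQ \<bullet> (H *v DR))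
        + (1/2) * (VP \<bullet> (H *v DP)) + (1/2) * (VP \<bullet> (H *v DR)) + (1/2) * (VR \<bullet> (H *v DR))"
      unfolding z3y g3 g2 g1 by (simp add: inner_add_left inner_add_right inner_commute add_divide_distrib)
    have oQ: "gq H W z0 \<bullet> VQ \<le> - \<alpha> * (dQ \<bullet> vQ)"
      using sQ'(2)[OF yG(1)] bz by (simp add: VQ_def vQ_def dQ_def)
    have oP: "gq H W z1 \<bullet> VP \<le> - \<beta> * (dP \<bullet> vP)"
      using sP'(2)[OF yG(2)] bz by (simp add: VP_def vP_def dP_def)
    have oR: "gq H W z2 \<bullet> VR \<le> - \<gamma> * (dR \<bullet> vR)"
      using sR'(2)[OF yG(3)] bz by (simp add: VR_def vR_def dR_def)
    have am1: "- a * (d \<bullet> v) \<le> u * (L * (v \<bullet> v)) + s * (a * (d \<bullet> d))" if "0 < a" "a \<le> L" for a and d v :: "real^'z"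
    proof -
      have "- a * (d \<bullet> v) \<le> a * ((t/2) * (v \<bullet> v) + (1/(2*t)) * (d \<bullet> d))"
        by (rule inner_amgm[OF t]) (use that in simp)
      also have "\<dots> = u * (a * (v \<bullet> v)) + s * (a * (d \<bullet> d))" by (simp add: u_def s_def algebra_simps)
      also have "\<dots> \<le> u * (L * (v \<bullet> v)) + s * (a * (d \<bullet> d))"
        using that upos by (simp add: mult_right_mono)
      finally show ?thesis .
    qed
    have AQ: "- \<alpha> * (dQ \<bullet> vQ) \<le> u * (L * aQ) + s * eQ" unfolding aQ_def eQ_def by (rule am1[OF apos(1) aL])
    have AP: "- \<beta> * (dP \<bullet> vP) \<le> u * (L * aP) + s * eP" unfolding aP_def eP_def by (rule am1[OF apos(2) bL])
    have AR: "- \<gamma> * (dR \<bullet> vR) \<le> u * (L * aR) + s * eR" unfolding aR_def eR_def by (rule am1[OF apos(3) gL])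
    have VV: "VQ \<bullet> (H *v VQ) \<le> L * aQ" "VP \<bullet> (H *v VP) \<le> L * aP" "VR \<bullet> (H *v VR) \<le> L * aR"
      using L[of VQ] L[of VP] L[of VR]
      by (simp_all add: VQ_def VP_def VR_def aQ_def aP_def aR_def normQ normP normR)
    have DD: "DQ \<bullet> (H *v DQ) \<le> eQ" "DP \<bullet> (H *v DP) \<le> eP" "DR \<bullet> (H *v DR) \<le> eR"
      using qb by (simp_all add: DQ_def DP_def DR_def eQ_def eP_def eR_def)
    have am2: "V \<bullet> (H *v D) \<le> u * a + s * e" if "V \<bullet> (H *v V) \<le> a" "D \<bullet> (H *v D) \<le> e" for V D a e
    proof -
      have "V \<bullet> (H *v D) \<le> (t/2) * (V \<bullet> (H *v V)) + (1/(2*t)) * (D \<bullet> (H *v D))"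
        by (rule psd_amgm[OF sym psd t])
      also have "\<dots> \<le> u * a + s * e"
        using that upos unfolding u_def s_def by (intro add_mono mult_left_mono) simp_all
      finally show ?thesis .
    qed
    have T: "VQ \<bullet> (H *v DQ) \<le> u * (L * aQ) + s * eQ" "VQ \<bullet> (H *v DP) \<le> u * (L * aQ) + s * eP"
      "VQ \<bullet> (H *v DR) \<le> u * (L * aQ) + s * eR" "VP \<bullet> (H *v DP) \<le> u * (L * aP) + s * eP"
      "VP \<bullet> (H *v DR) \<le> u * (L * aP) + s * eR" "VR \<bullet> (H *v DR) \<le> u * (L * aR) + s * eR"
      using am2 VV DD by blast+
    have nn: "u * (L * aQ) \<ge> 0" "u * (L * aP) \<ge> 0" "u * (L * aR) \<ge> 0"
      "s * eQ \<ge> 0" "s * eP \<ge> 0" "s * eR \<ge> 0"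
      using upos Lpos aN eQn by simp_all
    have fin: "(5/4) * (t * L * ((z3 - y) \<bullet> (z3 - y)) + E / t) =
        (5/2) * (u * (L * aQ)) + (5/2) * (u * (L * aP)) + (5/2) * (u * (L * aR))
        + (5/2) * (s * eQ) + (5/2) * (s * eP) + (5/2) * (s * eR)"
      unfolding N E_def u_def s_def using t by (simp add: field_simps)
    show ?thesis unfolding fin using conv split oQ oP oR AQ AP AR T nn by argo
  qed
  have e1: "bsum_step H eps l = z3" by (simp add: l'eq z3_def)
  have e2: "l = z0" using lQPR by (simp add: z0_def)
  show "\<exists>E\<ge>0. fq H (Wvec eps) (bsum_step H eps l) \<le> fq H (Wvec eps) l - (3/4) * E \<and>
          (\<forall>t>0. fq H (Wvec eps) (bsum_step H eps l) - fq H (Wvec eps) y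
              \<le> (5/4) * (t * L * ((bsum_step H eps l - y) \<bullet> (bsum_step H eps l - y)) + E / t))"
    unfolding e1 unfolding e2 W_def[symmetric]
    by (intro exI[of _ E] conjI En dec allI impI cost) simp
qed



lemma sq_bound:
  fixes D a b :: real
  assumes D: "D \<ge> 0" and a: "a \<ge> 0" and b: "b \<ge> 0" and h: "\<forall>t>0. D \<le> a * t + b / t"
  shows "D\<^sup>2 \<le> 4 * a * b"
proof (cases "D = 0")
  case True then show ?thesis using a b by simp
next
  case False
  then have Dp: "D > 0" using D by simp
  show ?thesis
  proof (cases "a = 0")
    case True
    define t where "t = b / D + 1"
    have tp: "t > 0" using b Dp by (simp add: t_def add_nonneg_pos)
    have "D \<le> b / t" using h tp True by auto
    then have "D * t \<le> b" using tp by (simp add: le_divide_eq)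
    moreover have "D * t = b + D" using Dp by (simp add: t_def field_simps)
    ultimately show ?thesis using Dp by simp
  next
    case False
    then have ap: "a > 0" using a by simp
    define t where "t = D / (2 * a)"
    have tp: "t > 0" using ap Dp by (simp add: t_def)
    have "D \<le> a * t + b / t" using h tp by auto
    also have "a * t = D / 2" using ap by (simp add: t_def)
    also have "b / t = 2 * a * b / D" using ap Dp by (simp add: t_def field_simps)
    finally have "D / 2 \<le> 2 * a * b / D" by simp
    then have "D / 2 * D \<le> 2 * a * b" using Dp by (simp add: le_divide_eq)
    then show ?thesis by (simp add: power2_eq_square)
  qed
qed

lemma rate:
  fixes D :: "nat \<Rightarrow> real" and K :: real
  assumes K: "K \<ge> 0" and Dn: "\<forall>k. D k \<ge> 0"
    and rec: "\<forall>k. (D (Suc k))\<^sup>2 \<le> K * (D k - D (Suc k))"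
  shows "let \<sigma> = 1 / K; c = max (max (4 * \<sigma> - 2) (D 0)) 2
         in \<forall>k\<ge>1. D k \<le> c / \<sigma> * (1 / real k)"
proof (cases "K = 0")
  case True
  have "D (Suc k) = 0" for k
  proof -
    have "(D (Suc k))\<^sup>2 \<le> 0" using rec True by auto
    then show ?thesis by simp
  qed
  then have "D k = 0" if kge: "k \<ge> 1" for k
  proof -
    obtain j where "k = Suc j" using kge by (cases k) auto
    then show ?thesis using \<open>\<And>k. D (Suc k) = 0\<close> by simp
  qed
  then show ?thesis using True by (simp add: Let_def)
next
  case False
  then have Kp: "K > 0" using K by simp
  define \<sigma> where "\<sigma> = 1 / K"
  define c where "c = max (max (4 * \<sigma> - 2) (D 0)) 2"
  have sp: "\<sigma> > 0" using Kp by (simp add: \<sigma>_def)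
  have c2: "c \<ge> 2" "c \<ge> 4 * \<sigma> - 2" "c \<ge> D 0" by (simp_all add: c_def)
  have cs: "c \<ge> \<sigma>" using c2 by linarith
  have cp: "c > 0" using c2 by linarith
  have recs: "\<sigma> * (D (Suc k))\<^sup>2 \<le> D k - D (Suc k)" for k
  proof -
    have "(D (Suc k))\<^sup>2 \<le> K * (D k - D (Suc k))" using rec by blast
    then have "(1/K) * (D (Suc k))\<^sup>2 \<le> (1/K) * (K * (D k - D (Suc k)))"
      using Kp by (intro mult_left_mono) simp_all
    then show ?thesis using Kp by (simp add: \<sigma>_def)
  qed
  have main: "D k \<le> c / (\<sigma> * real k)" if "k \<ge> 1" for k
    using that
  proof (induction k rule: nat_induct_at_least)
    case base
    show ?case
    proof (rule ccontr)
      assume "\<not> D 1 \<le> c / (\<sigma> * real 1)"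
      then have gt: "D 1 > c / \<sigma>" by simp
      have "c / \<sigma> \<ge> 0" using cp sp by simp
      then have "(c / \<sigma>)\<^sup>2 < (D 1)\<^sup>2" using gt by (intro power_strict_mono) simp_all
      then have "\<sigma> * (c / \<sigma>)\<^sup>2 < \<sigma> * (D 1)\<^sup>2" using sp by simp
      moreover have "\<sigma> * (c / \<sigma>)\<^sup>2 = c * (c / \<sigma>)" using sp by (simp add: power2_eq_square)
      moreover have "c * (c / \<sigma>) \<ge> c * 1" using cs cp sp by (intro mult_left_mono) (simp_all add: le_divide_eq)
      moreover have "\<sigma> * (D 1)\<^sup>2 \<le> D 0 - D 1" using recs[of 0] by simp
      ultimately show False using c2 Dn by (metis add.commute diff_le_eq le_add_same_cancel1 less_le_trans linorder_not_le mult.right_neutral order_trans)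
    qed
  next
    case (Suc k)
    define n where "n = real k"
    have n1: "n \<ge> 1" using Suc.hyps by (simp add: n_def)
    define A where "A = c / (\<sigma> * n)"
    define B where "B = c / (\<sigma> * (n + 1))"
    have DA: "D k \<le> A" using Suc.IH by (simp add: A_def n_def)
    have Bn: "B \<ge> 0" using cp sp n1 by (simp add: B_def)
    define m where "m = n + 1"
    have mp: "m > 0" "n > 0" using n1 by (simp_all add: m_def)
    have cnm: "c * n \<ge> n + 1"
    proof -
      have "c * n \<ge> 2 * n" using c2 n1 by (intro mult_right_mono) simp_all
      then show ?thesis using n1 by linarith
    qed
    have mm: "m\<^sup>2 \<le> n * (m + c)"
      using cnm by (simp add: m_def power2_eq_square algebra_simps)
    have "(m + c) / m\<^sup>2 - 1 / n = (n * (m + c) - m\<^sup>2) / (n * m\<^sup>2)"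
      using mp by (simp add: field_simps)
    also have "\<dots> \<ge> 0" using mm mp by simp
    finally have fr: "1 / n \<le> (m + c) / m\<^sup>2" by simp
    have h1: "B + \<sigma> * B\<^sup>2 = (c / \<sigma>) * ((m + c) / m\<^sup>2)"
      using sp mp unfolding B_def m_def[symmetric] by (simp add: field_simps power2_eq_square)
    have h2: "A = (c / \<sigma>) * (1 / n)" by (simp add: A_def)
    have "B + \<sigma> * B\<^sup>2 \<ge> A" unfolding h1 h2 using fr cp sp by (intro mult_left_mono) simp_all
    show ?case
    proof (rule ccontr)
      assume "\<not> D (Suc k) \<le> c / (\<sigma> * real (Suc k))"
      then have gt: "D (Suc k) > B" by (simp add: B_def n_def add.commute)
      then have "B\<^sup>2 < (D (Suc k))\<^sup>2" using Bn by (intro power_strict_mono) simp_all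
      then have "\<sigma> * B\<^sup>2 < \<sigma> * (D (Suc k))\<^sup>2" using sp by simp
      then have "A < D (Suc k) + \<sigma> * (D (Suc k))\<^sup>2"
        using gt \<open>B + \<sigma> * B\<^sup>2 \<ge> A\<close> by linarith
      then show False using recs[of k] DA by linarith
    qed
  qed
  show ?thesis unfolding Let_def \<sigma>_def[symmetric] c_def[symmetric]
    using main by (simp add: divide_inverse mult.assoc)
qed



lemma Jeq: "J_dual H eps l = (if feas l then ereal (fq H (Wvec eps) l) else \<infinity>)"
  by (simp add: J_dual_def feas_def fq_def)

theorem theorem3:
  fixes H :: "real^(('n::finite,'m::finite) bidx)^(('n,'m) bidx)"
    and eps :: real
    and lam :: "nat \<Rightarrow> real^(('n,'m) bidx)"
    and lstar :: "real^(('n,'m) bidx)"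
  assumes H_sym: "transpose H = H"
    and H_psd: "\<forall>v. 0 \<le> v \<bullet> (H *v v)"
    and eps_pos: "eps > 0"
    and alpha_pos: "lambda_max (Hblk iQ iQ H) > 0"
    and beta_pos: "lambda_max (Hblk iP iP H) > 0"
    and gamma_pos: "lambda_max (Hblk iR iR H) > 0"
    and lstar_min: "lstar \<in> dual_minimizers H eps"
    and init_fin: "J_dual H eps (lam 0) < \<infinity>"
    and iter: "\<forall>k. lam (Suc k) = bsum_step H eps (lam k)"
    and R_fin: "(SUP p \<in> {l. J_dual H eps l \<le> J_dual H eps (lam 0)} \<times> dual_minimizers H eps.
                   ereal (dist (fst p) (snd p))) < \<infinity>"
  shows "let \<R> = real_of_ereal (SUP p \<in> {l. J_dual H eps l \<le> J_dual H eps (lam 0)} \<times> dual_minimizers H eps.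
                   ereal (dist (fst p) (snd p)));
             \<sigma> = 1 / (9 * onorm (\<lambda>x. H *v x) * \<R>\<^sup>2);
             c = max (max (4 * \<sigma> - 2) (real_of_ereal (J_dual H eps (lam 0) - J_dual H eps lstar))) 2
         in \<forall>k\<ge>1. J_dual H eps (lam k) - J_dual H eps lstar \<le> ereal (c / \<sigma> * (1 / real k))"
proof -
  define W where "W = (Wvec eps :: real^(('n,'m) bidx))"
  define f where "f = fq H W"
  define L where "L = onorm (\<lambda>x. H *v x)"
  define S where "S = (SUP p \<in> {l. J_dual H eps l \<le> J_dual H eps (lam 0)} \<times> dual_minimizers H eps.
                   ereal (dist (fst p) (snd p)))"
  define Rv where "Rv = real_of_ereal S"
  have J: "J_dual H eps l = (if feas l then ereal (f l) else \<infinity>)" for l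
    by (simp add: Jeq f_def W_def)
  have bl: "bounded_linear (\<lambda>x. H *v x)"
    by (simp add: linear_conv_bounded_linear[symmetric])
  have Lpos: "L \<ge> 0" unfolding L_def by (rule onorm_pos_le[OF bl])
  have Lb: "x \<bullet> (H *v x) \<le> L * (x \<bullet> x)" for x
  proof -
    have "x \<bullet> (H *v x) \<le> norm x * norm (H *v x)" using Cauchy_Schwarz_ineq2[of x "H *v x"] by linarith
    also have "\<dots> \<le> norm x * (L * norm x)"
      unfolding L_def by (intro mult_left_mono onorm[OF bl]) simp
    also have "\<dots> = L * (x \<bullet> x)" by (simp add: power2_norm_eq_inner[symmetric] power2_eq_square)
    finally show ?thesis .
  qed
  have f0: "feas (lam 0)" using init_fin J[of "lam 0"] by (auto split: if_splits)
  have Jst: "J_dual H eps lstar \<le> J_dual H eps l" for l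
    using lstar_min unfolding dual_minimizers_def by blast
  have fst: "feas lstar" using Jst[of "lam 0"] init_fin J[of lstar] J[of "lam 0"] f0
    by (auto split: if_splits)
  have fstar_le: "f lstar \<le> f l" if "feas l" for l
    using Jst[of l] J[of l] J[of lstar] fst that by simp
  have feasall: "feas (lam k)" for k
  proof (induction k)
    case 0 then show ?case by (rule f0)
  next
    case (Suc k) then show ?case
      using iter_step(1)[OF H_sym H_psd alpha_pos beta_pos gamma_pos Suc fst Lb] iter by simp
  qed
  have stepk: "\<exists>E\<ge>0. f (lam (Suc k)) \<le> f (lam k) - (3/4) * E \<and>
          (\<forall>t>0. f (lam (Suc k)) - f lstar \<le> (5/4) * (t * L * ((lam (Suc k) - lstar) \<bullet> (lam (Suc k) - lstar)) + E / t))" for k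
    using iter_step(2)[OF H_sym H_psd alpha_pos beta_pos gamma_pos feasall[of k] fst Lb] iter
    by (simp add: f_def W_def)
  have mono1: "f (lam (Suc k)) \<le> f (lam k)" for k
    using stepk[of k] by force
  have mono: "f (lam k) \<le> f (lam 0)" for k
  proof (induction k)
    case 0 then show ?case by simp
  next
    case (Suc k) then show ?case using mono1[of k] by linarith
  qed
  have inF: "lam k \<in> {l. J_dual H eps l \<le> J_dual H eps (lam 0)}" for k
    using mono[of k] J[of "lam k"] J[of "lam 0"] feasall[of k] f0 by simp
  have lmin: "lstar \<in> dual_minimizers H eps" by (rule lstar_min)
  have dS: "ereal (dist (lam k) lstar) \<le> S" for k
    unfolding S_def using inF[of k] lmin
    by (intro SUP_upper2[where i="(lam k, lstar)"]) auto
  have S0: "S \<ge> 0" using dS[of 0] by (metis ereal_less_eq(5) order_trans zero_le_dist)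
  have Sfin: "S < \<infinity>" using R_fin by (simp add: S_def)
  have SRv: "S = ereal Rv" unfolding Rv_def using S0 Sfin by (cases S) auto
  have distle: "dist (lam k) lstar \<le> Rv" for k using dS[of k] SRv by simp
  have Rvn: "Rv \<ge> 0" using S0 SRv by simp
  define D where "D k = f (lam k) - f lstar" for k
  have Dn: "\<forall>k. D k \<ge> 0" using fstar_le feasall by (simp add: D_def)
  have recur: "\<forall>k. (D (Suc k))\<^sup>2 \<le> (9 * L * Rv\<^sup>2) * (D k - D (Suc k))"
  proof
    fix k
    obtain E where E: "E \<ge> 0" "f (lam (Suc k)) \<le> f (lam k) - (3/4) * E"
      and cg: "\<forall>t>0. f (lam (Suc k)) - f lstar \<le> (5/4) * (t * L * ((lam (Suc k) - lstar) \<bullet> (lam (Suc k) - lstar)) + E / t)"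
      using stepk[of k] by blast
    have N: "(lam (Suc k) - lstar) \<bullet> (lam (Suc k) - lstar) \<le> Rv\<^sup>2"
    proof -
      have "(lam (Suc k) - lstar) \<bullet> (lam (Suc k) - lstar) = (dist (lam (Suc k)) lstar)\<^sup>2"
        by (simp add: dist_norm power2_norm_eq_inner)
      also have "\<dots> \<le> Rv\<^sup>2" using distle[of "Suc k"] by (intro power_mono) simp_all
      finally show ?thesis .
    qed
    have h: "\<forall>t>0. D (Suc k) \<le> ((5/4) * L * Rv\<^sup>2) * t + ((5/4) * E) / t"
    proof (intro allI impI)
      fix t :: real assume t: "t > 0"
      have "t * L * ((lam (Suc k) - lstar) \<bullet> (lam (Suc k) - lstar)) \<le> t * L * Rv\<^sup>2"
        using N t Lpos by (intro mult_left_mono) simp_all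
      note tl = this
      have "D (Suc k) \<le> (5/4) * (t * L * ((lam (Suc k) - lstar) \<bullet> (lam (Suc k) - lstar)) + E / t)"
        unfolding D_def using cg t by blast
      also have "\<dots> \<le> (5/4) * (t * L * Rv\<^sup>2 + E / t)" using tl by simp
      also have "\<dots> = ((5/4) * L * Rv\<^sup>2) * t + ((5/4) * E) / t" by (simp add: algebra_simps)
      finally show "D (Suc k) \<le> ((5/4) * L * Rv\<^sup>2) * t + ((5/4) * E) / t" .
    qed
    have sq: "(D (Suc k))\<^sup>2 \<le> 4 * ((5/4) * L * Rv\<^sup>2) * ((5/4) * E)"
      by (rule sq_bound) (use Dn Lpos E h in simp_all)
    have Ele: "E \<le> (4/3) * (D k - D (Suc k))" using E by (simp add: D_def)
    have LR: "L * Rv\<^sup>2 \<ge> 0" using Lpos by simp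
    have "4 * ((5/4) * L * Rv\<^sup>2) * ((5/4) * E) = (25/4) * (L * Rv\<^sup>2) * E" by simp
    also have "\<dots> \<le> (25/4) * (L * Rv\<^sup>2) * ((4/3) * (D k - D (Suc k)))"
      using Ele LR by (intro mult_left_mono) simp_all
    also have "\<dots> = (25/3) * (L * Rv\<^sup>2) * (D k - D (Suc k))" by simp
    also have "\<dots> \<le> 9 * (L * Rv\<^sup>2) * (D k - D (Suc k))"
      using LR mono1[of k] by (intro mult_right_mono) (simp_all add: D_def)
    finally have X: "4 * ((5/4) * L * Rv\<^sup>2) * ((5/4) * E) \<le> 9 * (L * Rv\<^sup>2) * (D k - D (Suc k))" .
    have "(D (Suc k))\<^sup>2 \<le> 9 * (L * Rv\<^sup>2) * (D k - D (Suc k))" using sq X by (rule order_trans)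
    then show "(D (Suc k))\<^sup>2 \<le> (9 * L * Rv\<^sup>2) * (D k - D (Suc k))" by (simp add: mult.assoc)
  qed
  have K: "9 * L * Rv\<^sup>2 \<ge> 0" using Lpos by simp
  note r = rate[OF K Dn recur]
  have D0: "real_of_ereal (J_dual H eps (lam 0) - J_dual H eps lstar) = D 0"
    using J[of "lam 0"] J[of lstar] f0 fst by (simp add: D_def)
  have Dk: "J_dual H eps (lam k) - J_dual H eps lstar = ereal (D k)" for k
    using J[of "lam k"] J[of lstar] feasall[of k] fst by (simp add: D_def)
  show ?thesis
    using r unfolding Let_def S_def[symmetric] Rv_def[symmetric] L_def[symmetric] D0 Dk
    by simp
qed


end
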